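(* Let $\mathcal{X}$ be a set of feasible solutions and $f_1,\dots,f_m:\mathcal{X}\to\mathbb{R}$. Fix $K\ge1$, a preference vector $\boldsymbol{\lambda}$ with $\lambda_i\ge0$, $\sum_i\lambda_i=1$, and $\boldsymbol{z}^*\in\mathbb{R}^m$. For $X_K=\{\boldsymbol{x}^{(1)},\dots,\boldsymbol{x}^{(K)}\}\subseteq\mathcal{X}$ let $$g^{(\mathrm{TCH\text{-}Set})}(X_K\mid\boldsymbol{\lambda})=\max_{1\le i\le m}\Big\{\lambda_i\Big(\min_{1\le k\le K}f_i(\boldsymbol{x}^{(k)})-z_i^*\Big)\Big\},$$ and for $\mu>0$, $\mu_1,\dots,\mu_m>0$ let $$g^{(\mathrm{STCH\text{-}Set})}_{\mu,\{\mu_i\}}(X_K\mid\boldsymbol{\lambda})=\mu\log\left(\sum_{i=1}^m\exp\left(\frac{\lambda_i\left(-\mu_i\log\left(\sum_{k=1}^K e^{-f_i(\boldsymbol{x}^{(k)})/\mu_i}\right)-z_i^*\right)}{\mu}\right)\right).$$ Then $g^{(\mathrm{STCH\text{-}Set})}_{\mu,\{\mu_i\}}(\cdot\mid\boldsymbol{\lambda})$ is a uniform smooth approximation of $g^{(\mathrm{TCH\text{-}Set})}(\cdot\mid\boldsymbol{\lambda})$: for every set $X_K$ of $K$ solutions in $\mathcal{X}$, $$\lim_{\mu\downarrow0,\ \mu_i\downarrow0\ \forall i}g^{(\mathrm{STCH\text{-}Set})}_{\mu,\{\mu_i\}}(X_K\mid\boldsymbol{\lambda})=g^{(\mathrm{TCH\text{-}Set})}(X_K\mid\boldsymbol{\lambda}),$$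 with the convergence uniform over all such sets $X_K$. *)

theory Defs
  imports Complex_Main
begin

text \<open>Objectives are indexed 0..m-1, solutions of a set X_K are x 0, ..., x (K-1).\<close>

definition tch_set ::
  "nat \<Rightarrow> nat \<Rightarrow> (nat \<Rightarrow> 'x \<Rightarrow> real) \<Rightarrow> (nat \<Rightarrow> real) \<Rightarrow> (nat \<Rightarrow> real) \<Rightarrow> (nat \<Rightarrow> 'x) \<Rightarrow> real"
  where "tch_set m K f lam z x =
    Max ((\<lambda>i. lam i * (Min ((\<lambda>k. f i (x k)) ` {..<K}) - z i)) ` {..<m})"

definition stch_set ::
  "nat \<Rightarrow> nat \<Rightarrow> (nat \<Rightarrow> 'x \<Rightarrow> real) \<Rightarrow> (nat \<Rightarrow> real) \<Rightarrow> (nat \<Rightarrow> real)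
     \<Rightarrow> real \<Rightarrow> (nat \<Rightarrow> real) \<Rightarrow> (nat \<Rightarrow> 'x) \<Rightarrow> real"
  where "stch_set m K f lam z mu mus x =
    mu * ln (\<Sum>i<m. exp (lam i * (- mus i * ln (\<Sum>k<K. exp (- f i (x k) / mus i)) - z i) / mu))"

end

theory Submission
  imports Defs
begin

lemma lse_bounds:
  fixes b :: "'a \<Rightarrow> real"
  assumes A: "finite A" "A \<noteq> {}" and mu: "mu > 0"
  shows "Max (b ` A) \<le> mu * ln (\<Sum>i\<in>A. exp (b i / mu))"
    and "mu * ln (\<Sum>i\<in>A. exp (b i / mu)) \<le> Max (b ` A) + mu * ln (card A)"
proof -
  define M where "M = Max (b ` A)"
  have "M \<in> b ` A" unfolding M_def using A by (intro Max_in) auto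
  then obtain j where j: "j \<in> A" "b j = M" by auto
  have le: "b i \<le> M" if "i \<in> A" for i unfolding M_def using A that by auto
  have pos: "0 < (\<Sum>i\<in>A. exp (b i / mu))"
    using A by (intro sum_pos) auto
  have "exp (M/mu) \<le> (\<Sum>i\<in>A. exp (b i / mu))"
  proof -
    have "exp (b j / mu) \<le> (\<Sum>i\<in>A. exp (b i / mu))"
      using j A by (intro member_le_sum) auto
    thus ?thesis using j by simp
  qed
  hence "ln (exp (M/mu)) \<le> ln (\<Sum>i\<in>A. exp (b i / mu))"
    using pos by (subst ln_le_cancel_iff) auto
  hence "M/mu \<le> ln (\<Sum>i\<in>A. exp (b i / mu))" by simp
  thus "Max (b ` A) \<le> mu * ln (\<Sum>i\<in>A. exp (b i / mu))"
    using mu unfolding M_def by (simp add: divide_le_eq mult.commute)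
  have "(\<Sum>i\<in>A. exp (b i / mu)) \<le> (\<Sum>i\<in>A. exp (M / mu))"
    using le mu by (intro sum_mono) (auto simp: divide_right_mono)
  also have "\<dots> = real (card A) * exp (M/mu)" by simp
  finally have s: "(\<Sum>i\<in>A. exp (b i / mu)) \<le> real (card A) * exp (M/mu)" .
  have cpos: "real (card A) > 0" using A by (simp add: card_gt_0_iff)
  have "ln (\<Sum>i\<in>A. exp (b i / mu)) \<le> ln (real (card A) * exp (M/mu))"
    using s pos cpos by (subst ln_le_cancel_iff) auto
  also have "\<dots> = ln (card A) + M/mu" using cpos by (simp add: ln_mult)
  finally have "mu * ln (\<Sum>i\<in>A. exp (b i / mu)) \<le> mu * (ln (card A) + M/mu)"
    using mu by (simp add: mult_left_mono)
  also have "\<dots> = M + mu * ln (card A)" using mu by (simp add: field_simps)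
  finally show "mu * ln (\<Sum>i\<in>A. exp (b i / mu)) \<le> Max (b ` A) + mu * ln (card A)"
    unfolding M_def .
qed

lemma max_close:
  fixes b c :: "'a \<Rightarrow> real"
  assumes A: "finite A" "A \<noteq> {}" and h: "\<And>i. i \<in> A \<Longrightarrow> \<bar>b i - c i\<bar> \<le> d"
  shows "\<bar>Max (b ` A) - Max (c ` A)\<bar> \<le> d"
proof -
  have "Max (b ` A) \<in> b ` A" using A by (intro Max_in) auto
  then obtain j where j: "j \<in> A" "b j = Max (b ` A)" by auto
  have "Max (c ` A) \<in> c ` A" using A by (intro Max_in) auto
  then obtain l where l: "l \<in> A" "c l = Max (c ` A)" by auto
  have "c j \<le> Max (c ` A)" using A j by auto
  moreover have "b l \<le> Max (b ` A)" using A l by auto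
  ultimately show ?thesis using h[OF j(1)] h[OF l(1)] j l by auto
qed

lemma smin_bounds:
  fixes a :: "nat \<Rightarrow> real"
  assumes K: "K \<ge> 1" and mu: "mu > 0"
  shows "\<bar>- mu * ln (\<Sum>k<K. exp (- a k / mu)) - Min (a ` {..<K})\<bar> \<le> mu * ln K"
proof -
  have ne: "{..<K} \<noteq> {}" using K by (auto simp: lessThan_empty_iff)
  have mm: "Max ((\<lambda>k. - a k) ` {..<K}) = - Min (a ` {..<K})"
  proof -
    have "(\<lambda>k. - a k) ` {..<K} = uminus ` (a ` {..<K})" by auto
    moreover have "Max (uminus ` (a ` {..<K})) = - Min (a ` {..<K})"
      using ne by (intro Max_eqI) (auto intro: Min_in)
    ultimately show ?thesis by simp
  qed
  have l1: "Max ((\<lambda>k. - a k) ` {..<K}) \<le> mu * ln (\<Sum>k<K. exp (- a k / mu))"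
    by (rule lse_bounds(1)) (use ne mu in auto)
  have l2: "mu * ln (\<Sum>k<K. exp (- a k / mu)) \<le> Max ((\<lambda>k. - a k) ` {..<K}) + mu * ln (card {..<K})"
    by (rule lse_bounds(2)) (use ne mu in auto)
  have "mu * ln K \<ge> 0" using K mu by simp
  thus ?thesis using l1 l2 mm unfolding card_lessThan abs_le_iff by linarith
qed

theorem theorem3:
  fixes Xs :: "'x set" and f :: "nat \<Rightarrow> 'x \<Rightarrow> real"
    and lam z :: "nat \<Rightarrow> real" and m K :: nat
  assumes "m \<ge> 1" and "K \<ge> 1"
    and "\<And>i. i < m \<Longrightarrow> lam i \<ge> 0"
    and "(\<Sum>i<m. lam i) = 1"
  shows "\<forall>\<epsilon>>0. \<exists>\<delta>>0. \<forall>mu mus. 0 < mu \<and> mu < \<delta> \<and> (\<forall>i<m. 0 < mus i \<and> mus i < \<delta>) \<longrightarrow>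
           (\<forall>x. (\<forall>k<K. x k \<in> Xs) \<and> inj_on x {..<K} \<longrightarrow>
              \<bar>stch_set m K f lam z mu mus x - tch_set m K f lam z x\<bar> < \<epsilon>)"
proof (intro allI impI)
  fix \<epsilon> :: real assume e: "\<epsilon> > 0"
  define C where "C = ln (real K) + ln (real m) + 1"
  have lK: "ln (real K) \<ge> 0" and lm: "ln (real m) \<ge> 0" using assms(1,2) by auto
  have Cpos: "C > 0" unfolding C_def using lK lm by simp
  have lam1: "lam i \<le> 1" if "i < m" for i
  proof -
    have "lam i \<le> (\<Sum>j<m. lam j)"
      using that assms(3) by (intro member_le_sum) auto
    thus ?thesis using assms(4) by simp
  qed
  show "\<exists>\<delta>>0. \<forall>mu mus. 0 < mu \<and> mu < \<delta> \<and> (\<forall>i<m. 0 < mus i \<and> mus i < \<delta>) \<longrightarrow>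
           (\<forall>x. (\<forall>k<K. x k \<in> Xs) \<and> inj_on x {..<K} \<longrightarrow>
              \<bar>stch_set m K f lam z mu mus x - tch_set m K f lam z x\<bar> < \<epsilon>)"
  proof (rule exI[of _ "\<epsilon> / C"], intro conjI allI impI)
    show "\<epsilon> / C > 0" using e Cpos by simp
    fix mu :: real and mus :: "nat \<Rightarrow> real" and x :: "nat \<Rightarrow> 'x"
    assume H: "0 < mu \<and> mu < \<epsilon> / C \<and> (\<forall>i<m. 0 < mus i \<and> mus i < \<epsilon> / C)"
    define b where "b i = lam i * (- mus i * ln (\<Sum>k<K. exp (- f i (x k) / mus i)) - z i)" for i
    define c where "c i = lam i * (Min ((\<lambda>k. f i (x k)) ` {..<K}) - z i)" for i
    have ne: "{..<m} \<noteq> {}" using assms(1) by (auto simp: lessThan_empty_iff)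
    have bc: "\<bar>b i - c i\<bar> \<le> (\<epsilon> / C) * ln K" if i: "i \<in> {..<m}" for i
    proof -
      have mi: "0 < mus i" "mus i < \<epsilon> / C" using H i by auto
      have s: "\<bar>- mus i * ln (\<Sum>k<K. exp (- f i (x k) / mus i)) - Min ((\<lambda>k. f i (x k)) ` {..<K})\<bar> \<le> mus i * ln K"
        using smin_bounds[OF assms(2) mi(1), of "\<lambda>k. f i (x k)"] by simp
      have "b i - c i = lam i * (- mus i * ln (\<Sum>k<K. exp (- f i (x k) / mus i)) - Min ((\<lambda>k. f i (x k)) ` {..<K}))"
        unfolding b_def c_def by (simp add: algebra_simps)
      hence "\<bar>b i - c i\<bar> = lam i * \<bar>- mus i * ln (\<Sum>k<K. exp (- f i (x k) / mus i)) - Min ((\<lambda>k. f i (x k)) ` {..<K})\<bar>"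
        using assms(3) i by (simp add: abs_mult)
      also have "\<dots> \<le> 1 * (mus i * ln K)"
        using s lam1 assms(3) i by (intro mult_mono) auto
      also have "\<dots> \<le> (\<epsilon> / C) * ln K" using mi lK by (simp only: mult_1_left, intro mult_right_mono) auto
      finally show ?thesis .
    qed
    have st: "stch_set m K f lam z mu mus x = mu * ln (\<Sum>i<m. exp (b i / mu))"
      unfolding stch_set_def b_def ..
    have tc: "tch_set m K f lam z x = Max (c ` {..<m})"
      unfolding tch_set_def c_def ..
    have L1: "Max (b ` {..<m}) \<le> mu * ln (\<Sum>i<m. exp (b i / mu))"
      and L2: "mu * ln (\<Sum>i<m. exp (b i / mu)) \<le> Max (b ` {..<m}) + mu * ln m"
      using lse_bounds[of "{..<m}" mu b] ne H by auto
    have M: "\<bar>Max (b ` {..<m}) - Max (c ` {..<m})\<bar> \<le> (\<epsilon> / C) * ln K"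
      using max_close[of "{..<m}" b c] bc ne by auto
    have "mu * ln m \<le> (\<epsilon> / C) * ln m" using H lm by (intro mult_right_mono) auto
    hence "\<bar>stch_set m K f lam z mu mus x - tch_set m K f lam z x\<bar> \<le> (\<epsilon> / C) * ln K + (\<epsilon> / C) * ln m"
      unfolding st tc using L1 L2 M lK lm H by (auto simp: abs_le_iff)
    also have "\<dots> < (\<epsilon> / C) * C"
    proof -
      have "ln K + ln m < C" unfolding C_def by simp
      hence "(\<epsilon> / C) * (ln K + ln m) < (\<epsilon> / C) * C"
        using e Cpos by (intro mult_strict_left_mono) auto
      thus ?thesis by (simp add: distrib_left)
    qed
    also have "\<dots> = \<epsilon>" using Cpos by simp
    finally show "\<bar>stch_set m K f lam z mu mus x - tch_set m K f lam z x\<bar> < \<epsilon>" .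
  qed
qed

end
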